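(* Let $l$ be a positive integer, $\epsilon\in(0,1)$, $\theta\in[0,1)$, and let $N$ be a positive integer with $N\ge 5.34\ln(4l/\epsilon)$. For $k=1,\dots,l$ let $N_{x,k}\sim\mathrm{Bin}\big(N,(1+\cos(2\pi 2^{k-1}\theta))/2\big)$ and $N_{y,k}\sim\mathrm{Bin}\big(N,(1+\sin(2\pi 2^{k-1}\theta))/2\big)$, all $2l$ variables independent. Put $t_k=\frac{1}{2\pi}\big(\mathrm{atan2}(2N_{y,k}/N-1,2N_{x,k}/N-1)\big)_{\mathrm{mod}\,2\pi}$ and $x(k)=(t_k-1/6)_{\mathrm{mod}\,1}$. Define $z(1)=x(1)$ and, for $k=1,\dots,l-1$, with $d_k=(x(k+1)-2z(k))_{\mathrm{mod}\,1}$: $z(k+1)=2z(k)+d_k$ if $d_k\in[0,1/3)$, $z(k+1)=2z(k)+1/3$ if $d_k\in[1/3,2/3)$, $z(k+1)=2z(k)$ if $d_k\in[2/3,1)$. Then with probability at least $1-\epsilon$, $\theta$ lies in the arc $\big[z(l)/2^{l-1},(z(l)+1/3)/2^{l-1}\big]$ on the circle of unit circumference (length $1/(3\cdot2^{l-1})$); in particular $\hat\theta=\big((z(l)+1/6)/2^{l-1}\big)_{\mathrm{mod}\,1}$ satisfies $\Pr\big(|\hat\theta-\theta|_1\le 1/(3\cdot 2^l)\big)\ge 1-\epsilon$.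
   Context: This models iterative phase estimation of $U_\theta=\mathrm{diag}(1,e^{i2\pi\theta})$ using a single qubit: at stage $k$, $U_\theta$ is applied $2^{k-1}$ times to $|\psi_x\rangle=(|0\rangle+|1\rangle)/\sqrt2$, and the result is measured $N$ times with $\{|\psi_x\rangle\langle\psi_x|,\mathbb{I}-|\psi_x\rangle\langle\psi_x|\}$ and $N$ times with $\{|\psi_y\rangle\langle\psi_y|,\mathbb{I}-|\psi_y\rangle\langle\psi_y|\}$, $|\psi_y\rangle=(|0\rangle+i|1\rangle)/\sqrt2$; $N_{x,k},N_{y,k}$ count outcomes $1$. $(a)_{\mathrm{mod}\,c}$ is the representative of $a$ in $[0,c)$; an arc $[a,b]$ with $b-a<1$ is $\{t_{\mathrm{mod}\,1}:t\in[a,b]\}$; $|\hat\theta-\theta|_1=\min((\hat\theta-\theta)_{\mathrm{mod}\,1},(\theta-\hat\theta)_{\mathrm{mod}\,1})$; $\mathrm{atan2}$ is the polar angle (any fixed convention at $(0,0)$). *)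

theory Defs
  imports "HOL-Probability.Probability"
begin

definition rmod :: "real \<Rightarrow> real \<Rightarrow> real" where
  "rmod a c = a - c * of_int \<lfloor>a / c\<rfloor>"

text \<open>atan2(y,x): polar angle of the point (x,y); convention Arg 0 = 0 at the origin.\<close>
definition atan2 :: "real \<Rightarrow> real \<Rightarrow> real" where
  "atan2 y x = Arg (Complex x y)"

text \<open>Membership in the arc [a,b] (with b - a < 1) of the circle of unit circumference.\<close>
definition on_arc :: "real \<Rightarrow> real \<Rightarrow> real \<Rightarrow> bool" where
  "on_arc th a b \<longleftrightarrow> (\<exists>t. a \<le> t \<and> t \<le> b \<and> rmod t 1 = th)"

definition circ_dist :: "real \<Rightarrow> real \<Rightarrow> real" where
  "circ_dist a b = min (rmod (a - b) 1) (rmod (b - a) 1)"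

definition t_est :: "nat \<Rightarrow> nat \<Rightarrow> nat \<Rightarrow> real" where
  "t_est N nx ny = rmod (atan2 (2 * real ny / real N - 1) (2 * real nx / real N - 1)) (2 * pi) / (2 * pi)"

definition x_est :: "nat \<Rightarrow> nat \<Rightarrow> nat \<Rightarrow> real" where
  "x_est N nx ny = rmod (t_est N nx ny - 1/6) 1"

definition z_step :: "real \<Rightarrow> real \<Rightarrow> real" where
  "z_step zk xk1 = (let d = rmod (xk1 - 2 * zk) 1 in
     if d < 1/3 then 2 * zk + d
     else if d < 2/3 then 2 * zk + 1/3
     else 2 * zk)"

text \<open>z_aux x j = z(j+1), for a sequence x indexed from 1.\<close>
primrec z_aux :: "(nat \<Rightarrow> real) \<Rightarrow> nat \<Rightarrow> real" where
  "z_aux x 0 = x 1"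
| "z_aux x (Suc j) = z_step (z_aux x j) (x (j + 2))"

definition z_seq :: "(nat \<Rightarrow> real) \<Rightarrow> nat \<Rightarrow> real" where
  "z_seq x k = z_aux x (k - 1)"

definition counts_pmf :: "nat \<Rightarrow> nat \<Rightarrow> real \<Rightarrow> ((nat \<Rightarrow> nat) \<times> (nat \<Rightarrow> nat)) pmf" where
  "counts_pmf l N \<theta> =
     pair_pmf
       (Pi_pmf {1..l} 0 (\<lambda>k. binomial_pmf N ((1 + cos (2 * pi * 2 ^ (k - 1) * \<theta>)) / 2)))
       (Pi_pmf {1..l} 0 (\<lambda>k. binomial_pmf N ((1 + sin (2 * pi * 2 ^ (k - 1) * \<theta>)) / 2)))"

end

theory Submission
  imports Defs
begin

lemma geo:
  fixes a b \<alpha> :: real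
  assumes ua: "\<bar>a - cos \<alpha>\<bar> < sqrt 6 / 4" and vb: "\<bar>b - sin \<alpha>\<bar> < sqrt 6 / 4"
  shows "\<exists>i::int. \<bar>rmod (Arg (Complex a b)) (2 * pi) / (2 * pi) - \<alpha>/(2 * pi) - i\<bar> < 1/6"
proof -
  define c s where "c = cos \<alpha>" and "s = sin \<alpha>"
  have cs: "c^2 + s^2 = 1" unfolding c_def s_def by simp
  define u v where "u = a - c" and "v = b - s"
  have s6: "(sqrt 6 / 4)^2 = 3/8" by (simp add: power_divide)
  have u2: "u^2 < 3/8" using ua unfolding u_def c_def s6[symmetric]
    by (metis abs_ge_zero power2_abs power_strict_mono zero_less_numeral)
  have v2: "v^2 < 3/8" using vb unfolding v_def s_def s6[symmetric]
    by (metis abs_ge_zero power2_abs power_strict_mono zero_less_numeral)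
  define xr xi where "xr = a * c + b * s" and "xi = b * c - a * s"
  have xr1: "xr = 1 + u * c + v * s" unfolding xr_def u_def v_def using cs by (simp add: algebra_simps power2_eq_square)
  have xi1: "xi = v * c - u * s" unfolding xi_def u_def v_def by (simp add: algebra_simps)
  have e: "(xr - 1)^2 + xi^2 = u^2 + v^2"
  proof -
    have "(xr - 1)^2 + xi^2 = (u^2+v^2) * (c^2+s^2)" unfolding xr1 xi1 by (simp add: algebra_simps power2_eq_square)
    then show ?thesis using cs by simp
  qed
  have lt: "(xr - 1)^2 + xi^2 < 3/4" using e u2 v2 by linarith
  have xrpos: "xr > 0"
  proof (rule ccontr)
    assume "\<not> xr > 0"
    then have "1 \<le> (1 - xr)^2" by (intro one_le_power) simp
    then have "(xr - 1)^2 \<ge> 1" by (simp add: power2_commute)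
    moreover have "0 \<le> xi^2" by simp
    ultimately show False using lt by linarith
  qed
  have key: "xi^2 < 3 * xr^2"
  proof (rule ccontr)
    assume "\<not> xi^2 < 3 * xr^2"
    then have "xi^2 \<ge> 3 * xr^2" by simp
    have h1: "(xr-1)^2 = xr^2 - 2 * xr + 1" by (simp add: power2_eq_square algebra_simps)
    have h2: "(2 * xr - 1/2)^2 = 4 * xr^2 - 2 * xr + 1/4" by (simp add: power2_eq_square algebra_simps)
    have "0 \<le> (2 * xr - 1/2)^2" by simp
    then show False using lt h1 h2 \<open>xi^2 \<ge> 3 * xr^2\<close> by linarith
  qed
  define q where "q = Complex xr xi"
  define z where "z = Complex a b"
  have nq: "norm q = sqrt (xr^2 + xi^2)" unfolding q_def by (simp add: complex_norm)
  have nz: "norm z = sqrt (a^2 + b^2)" unfolding z_def by (simp add: complex_norm)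
  have sq: "xr^2 + xi^2 = a^2 + b^2"
  proof -
    have "xr^2 + xi^2 = (a^2+b^2) * (c^2+s^2)" unfolding xr_def xi_def by (simp add: algebra_simps power2_eq_square)
    then show ?thesis using cs by simp
  qed
  have nqz: "norm q = norm z" using nq nz sq by simp
  have q0: "q \<noteq> 0" using xrpos unfolding q_def by (auto simp: complex_eq_iff)
  have z0: "z \<noteq> 0" using q0 nqz by auto
  have npos: "norm q > 0" using q0 by simp
  have cosq: "cos (Arg q) = xr / norm q" using cos_Arg[OF q0] unfolding q_def by simp
  have sinq: "sin (Arg q) = xi / norm q" using sin_Arg[OF q0] unfolding q_def by simp
  have "2 * xr > norm q"
  proof -
    have "(norm q)^2 = xr^2 + xi^2" unfolding nq by simp
    also have "\<dots> < (2 * xr)^2" using key by (simp add: power2_eq_square)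
    finally show ?thesis using xrpos by (smt (verit) norm_ge_zero power_mono)
  qed
  then have "1/2 < xr / norm q" using npos by (simp add: field_simps)
  then have cgt: "cos (Arg q) > 1/2" using cosq by simp
  have argb: "\<bar>Arg q\<bar> < pi/3"
  proof (rule ccontr)
    assume "\<not> \<bar>Arg q\<bar> < pi/3"
    then have h: "pi/3 \<le> \<bar>Arg q\<bar>" by simp
    have "\<bar>Arg q\<bar> \<le> pi" using Arg_bounded[of q] by linarith
    then have "cos \<bar>Arg q\<bar> \<le> cos (pi/3)" using h by (intro cos_monotone_0_pi_le) auto
    then have "cos (Arg q) \<le> 1/2" by (simp add: cos_60)
    then show False using cgt by simp
  qed
  have "sin (Arg z) = sin (Arg q + \<alpha>) \<and> cos (Arg z) = cos (Arg q + \<alpha>)"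
  proof
    have "sin (Arg q + \<alpha>) = (xi * c + xr * s) / norm q" unfolding sin_add sinq cosq c_def s_def
      by (simp add: add_divide_distrib diff_divide_distrib)
    also have "xi * c + xr * s = b" unfolding xi_def xr_def using cs by (simp add: algebra_simps power2_eq_square) (metis distrib_left mult.right_neutral power2_eq_square)
    finally show "sin (Arg z) = sin (Arg q + \<alpha>)" using sin_Arg[OF z0] nqz unfolding z_def by simp
    have "cos (Arg q + \<alpha>) = (xr * c - xi * s) / norm q" unfolding cos_add sinq cosq c_def s_def
      by (simp add: add_divide_distrib diff_divide_distrib)
    also have "xr * c - xi * s = a" unfolding xi_def xr_def using cs by (simp add: algebra_simps power2_eq_square) (metis distrib_left mult.right_neutral power2_eq_square)
    finally show "cos (Arg z) = cos (Arg q + \<alpha>)" using cos_Arg[OF z0] nqz unfolding z_def by simp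
  qed
  then obtain n :: int where n: "Arg z = Arg q + \<alpha> + 2 * pi * n" using sin_cos_eq_iff by blast
  define F where "F = \<lfloor>Arg z / (2 * pi)\<rfloor>"
  have r: "rmod (Arg z) (2 * pi) / (2 * pi) = Arg q / (2 * pi) + \<alpha>/(2 * pi) + n - F"
  proof -
    have "rmod (Arg z) (2 * pi) = Arg z - 2 * pi * F" by (simp add: rmod_def F_def)
    then show ?thesis unfolding n using pi_gt_zero by (simp add: field_simps)
  qed
  have "\<bar>Arg q / (2 * pi)\<bar> < 1/6" using argb pi_gt_zero by (simp add: abs_divide field_simps)
  then show ?thesis using r unfolding z_def by (intro exI[of _ "n - F"]) simp
qed

lemma rmod1: "rmod a 1 = a - \<lfloor>a\<rfloor>" by (simp add: rmod_def)

lemma shiftB: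
  fixes t \<phi> :: real and i :: int
  assumes "\<bar>t - \<phi> - i\<bar> < 1/6"
  shows "\<exists>j::int. 0 < \<phi> - rmod (t - 1/6) 1 - j \<and> \<phi> - rmod (t - 1/6) 1 - j < 1/3"
proof -
  define F where "F = \<lfloor>t - 1/6\<rfloor>"
  have "rmod (t - 1/6) 1 = t - 1/6 - F" by (simp add: rmod1 F_def)
  moreover have "t - \<phi> - i < 1/6" "-(t - \<phi> - i) < 1/6" using assms by linarith+
  ultimately show ?thesis by (intro exI[of _ "F - i"]) auto
qed

lemma z_aux_inv:
  fixes x :: "nat \<Rightarrow> real" and \<theta> :: real
  assumes "\<And>k. 1 \<le> k \<Longrightarrow> k \<le> j+1 \<Longrightarrow> (\<exists>i::int. 0 < 2^(k-1) * \<theta> - x k - i \<and> 2^(k-1) * \<theta> - x k - i < 1/3)"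
  shows "\<exists>m::int. z_aux x j \<le> 2^j * (\<theta> + m) \<and> 2^j * (\<theta> + m) \<le> z_aux x j + 1/3"
  using assms
proof (induction j)
  case 0
  then obtain i :: int where "0 < \<theta> - x 1 - i \<and> \<theta> - x 1 - i < 1/3" by fastforce
  then show ?case by (intro exI[of _ "-i"]) auto
next
  case (Suc j)
  then obtain m :: int where m: "z_aux x j \<le> 2^j * (\<theta> + m) \<and> 2^j * (\<theta> + m) \<le> z_aux x j + 1/3"
    by auto
  obtain i :: int where i: "0 < 2^(Suc j) * \<theta> - x (j+2) - i \<and> 2^(Suc j) * \<theta> - x (j+2) - i < 1/3"
    using Suc.prems[of "j+2"] by auto
  define z where "z = z_aux x j"
  define x' where "x' = x (j+2)"
  define u where "u = 2^j * (\<theta> + m)"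
  define F where "F = \<lfloor>x' - 2 * z\<rfloor>"
  define d where "d = rmod (x' - 2 * z) 1"
  have d: "d = x' - 2 * z - F" unfolding d_def F_def rmod1 by simp
  have d01: "0 \<le> d" "d < 1" unfolding d F_def by linarith+
  define e where "e = 2^(Suc j) * \<theta> - x' - i"
  have e: "0 < e" "e < 1/3" using i unfolding e_def x'_def by auto
  define n :: int where "n = i + 2^(Suc j) * m + F"
  have wd: "2 * u - 2 * z - d = e + n" unfolding u_def d e_def n_def by (simp add: algebra_simps)
  have u: "z \<le> u" "u \<le> z + 1/3" using m unfolding z_def u_def by auto
  have new: "2^(Suc j) * (\<theta> + m) = 2 * u" unfolding u_def by simp
  have n1: "real_of_int n < 1" using wd u d01 e by linarith
  have n2: "real_of_int n > -2" using wd u d01 e by linarith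
  have "n = 0 \<or> n = -1" using n1 n2 by linarith
  have zs: "z_aux x (Suc j) = z_step z x'" unfolding z_def x'_def by simp
  have goal: "z_step z x' \<le> 2 * u \<and> 2 * u \<le> z_step z x' + 1/3"
  proof -
    have nn: "real_of_int n = 0 \<or> real_of_int n = -1" using \<open>n = 0 \<or> n = -1\<close> by auto
    consider "d < 1/3" | "1/3 \<le> d" "d < 2/3" | "2/3 \<le> d" by linarith
    then show ?thesis
    proof cases
      case 1
      then have "z_step z x' = 2 * z + d" unfolding z_step_def Let_def d_def[symmetric] by simp
      moreover have "2 * z + d \<le> 2 * u \<and> 2 * u \<le> 2 * z + d + 1/3"
        using nn proof
        assume "real_of_int n = 0" then show ?thesis using wd e by linarith
      next
        assume "real_of_int n = -1" then show ?thesis using wd e u 1 d01 by linarith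
      qed
      ultimately show ?thesis by simp
    next
      case 2
      then have "z_step z x' = 2 * z + 1/3" unfolding z_step_def Let_def d_def[symmetric] by simp
      moreover have "2 * z + 1/3 \<le> 2 * u \<and> 2 * u \<le> 2 * z + 1/3 + 1/3"
        using nn proof
        assume "real_of_int n = 0" then show ?thesis using wd e u 2 by linarith
      next
        assume "real_of_int n = -1" then show ?thesis using wd e u 2 d01 by linarith
      qed
      ultimately show ?thesis by simp
    next
      case 3
      then have "z_step z x' = 2 * z" unfolding z_step_def Let_def d_def[symmetric] by simp
      moreover have "2 * z \<le> 2 * u \<and> 2 * u \<le> 2 * z + 1/3"
        using nn proof
        assume "real_of_int n = 0" then show ?thesis using wd e u 3 d01 by linarith
      next
        assume "real_of_int n = -1" then show ?thesis using wd e u 3 d01 by linarith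
      qed
      ultimately show ?thesis by simp
    qed
  qed
  show ?case unfolding zs by (rule exI[of _ m], unfold new, rule goal)
qed

lemma final_arc:
  fixes x :: "nat \<Rightarrow> real" and \<theta> :: real and l :: nat
  assumes "l \<ge> 1" "0 \<le> \<theta>" "\<theta> < 1"
    and "\<And>k. 1 \<le> k \<Longrightarrow> k \<le> l \<Longrightarrow> (\<exists>i::int. 0 < 2^(k-1) * \<theta> - x k - i \<and> 2^(k-1) * \<theta> - x k - i < 1/3)"
  shows "on_arc \<theta> (z_seq x l / 2 ^ (l - 1)) ((z_seq x l + 1/3) / 2 ^ (l - 1)) \<and>
         circ_dist (rmod ((z_seq x l + 1/6) / 2 ^ (l - 1)) 1) \<theta> \<le> 1 / (3 * 2 ^ l)"
proof -
  obtain m :: int where m: "z_aux x (l-1) \<le> 2^(l-1) * (\<theta> + m) \<and> 2^(l-1) * (\<theta> + m) \<le> z_aux x (l-1) + 1/3"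
    using z_aux_inv[of "l-1" \<theta> x] assms by auto
  define z where "z = z_seq x l"
  define P :: real where "P = 2^(l-1)"
  have P: "P > 0" unfolding P_def by simp
  have zm: "z \<le> P * (\<theta> + m)" "P * (\<theta> + m) \<le> z + 1/3" using m unfolding z_def z_seq_def P_def by auto
  have t1: "z / P \<le> \<theta> + m" using zm P by (simp add: field_simps)
  have t2: "\<theta> + m \<le> (z + 1/3) / P" using zm P by (simp add: field_simps)
  have fl: "\<lfloor>\<theta> + m\<rfloor> = m" using assms by (simp add: floor_eq_iff)
  have arc: "on_arc \<theta> (z / P) ((z + 1/3) / P)"
    unfolding on_arc_def using t1 t2 fl by (intro exI[of _ "\<theta> + m"]) (simp add: rmod1)
  define c where "c = (z + 1/6) / P"
  define G where "G = \<lfloor>c\<rfloor>"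
  define e where "e = c - \<theta> - m"
  have P2: "3 * 2^l = 6 * P"
  proof -
    obtain k where "l = Suc k" using assms(1) by (cases l) auto
    then show ?thesis unfolding P_def by simp
  qed
  have eb: "\<bar>e\<bar> \<le> 1 / (6 * P)" using zm P unfolding e_def c_def by (simp add: field_simps abs_le_iff)
  have eb1: "1 / (6 * P) \<le> 1/6" using P unfolding P_def by (simp add: field_simps)
  have rc: "rmod c 1 - \<theta> = e + real_of_int (m - G)" unfolding rmod1 G_def e_def by simp
  have cd: "circ_dist (rmod c 1) \<theta> \<le> \<bar>e\<bar>"
  proof (cases "e \<ge> 0")
    case True
    have "\<lfloor>e + real_of_int (m - G)\<rfloor> = m - G" using True eb eb1 by (simp add: floor_eq_iff)
    then have "rmod (e + real_of_int (m - G)) 1 = e" unfolding rmod1 by simp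
    then have "rmod (rmod c 1 - \<theta>) 1 = e" by (simp only: rc)
    then show ?thesis unfolding circ_dist_def using True by simp
  next
    case False
    have "\<lfloor>-e + real_of_int (G - m)\<rfloor> = G - m" using False eb eb1 by (simp add: floor_eq_iff)
    moreover have "\<theta> - rmod c 1 = -e + real_of_int (G - m)" using rc by simp
    moreover have "rmod (-e + real_of_int (G - m)) 1 = -e" unfolding rmod1 using calculation(1) by simp
    ultimately have "rmod (\<theta> - rmod c 1) 1 = -e" by simp
    then show ?thesis unfolding circ_dist_def using False by simp
  qed
  show ?thesis using arc cd eb P2 unfolding z_def[symmetric] P_def[symmetric] c_def by simp
qed

lemma margA:
  assumes "k \<in> {1..l}"
  shows "measure_pmf.prob (counts_pmf l N \<theta>) {w. P (fst w k)} =
         measure_pmf.prob (binomial_pmf N ((1 + cos (2 * pi * 2 ^ (k - 1) * \<theta>)) / 2)) {x. P x}"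
proof -
  have "map_pmf (\<lambda>w. fst w k) (counts_pmf l N \<theta>) = map_pmf (\<lambda>f. f k) (map_pmf fst (counts_pmf l N \<theta>))"
    by (simp add: map_pmf_comp)
  also have "\<dots> = binomial_pmf N ((1 + cos (2 * pi * 2 ^ (k - 1) * \<theta>)) / 2)"
    unfolding counts_pmf_def map_fst_pair_pmf using assms by (subst Pi_pmf_component) auto
  finally have e: "map_pmf (\<lambda>w. fst w k) (counts_pmf l N \<theta>) = binomial_pmf N ((1 + cos (2 * pi * 2 ^ (k - 1) * \<theta>)) / 2)" .
  have "measure_pmf.prob (counts_pmf l N \<theta>) {w. P (fst w k)} = measure_pmf.prob (map_pmf (\<lambda>w. fst w k) (counts_pmf l N \<theta>)) {x. P x}"
    unfolding measure_map_pmf by (simp add: vimage_def)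
  then show ?thesis unfolding e .
qed

lemma margB:
  assumes "k \<in> {1..l}"
  shows "measure_pmf.prob (counts_pmf l N \<theta>) {w. P (snd w k)} =
         measure_pmf.prob (binomial_pmf N ((1 + sin (2 * pi * 2 ^ (k - 1) * \<theta>)) / 2)) {x. P x}"
proof -
  have "map_pmf (\<lambda>w. snd w k) (counts_pmf l N \<theta>) = map_pmf (\<lambda>f. f k) (map_pmf snd (counts_pmf l N \<theta>))"
    by (simp add: map_pmf_comp)
  also have "\<dots> = binomial_pmf N ((1 + sin (2 * pi * 2 ^ (k - 1) * \<theta>)) / 2)"
    unfolding counts_pmf_def map_snd_pair_pmf using assms by (subst Pi_pmf_component) auto
  finally have e: "map_pmf (\<lambda>w. snd w k) (counts_pmf l N \<theta>) = binomial_pmf N ((1 + sin (2 * pi * 2 ^ (k - 1) * \<theta>)) / 2)" .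
  have "measure_pmf.prob (counts_pmf l N \<theta>) {w. P (snd w k)} = measure_pmf.prob (map_pmf (\<lambda>w. snd w k) (counts_pmf l N \<theta>)) {x. P x}"
    unfolding measure_map_pmf by (simp add: vimage_def)
  then show ?thesis unfolding e .
qed

lemma hoef:
  assumes "0 \<le> p" "p \<le> 1" "N \<ge> 1"
  shows "measure_pmf.prob (binomial_pmf N p) {x. sqrt 6 / 8 \<le> \<bar>real x / real N - p\<bar>} \<le> 2 * exp (- 3 * real N / 16)"
proof -
  have bd: "binomial_distribution p" using assms by unfold_locales auto
  have "measure_pmf.prob (binomial_pmf N p) {x. sqrt 6 / 8 \<le> \<bar>real x / real N - p\<bar>}
     \<le> 2 * exp (real_of_int (- 2 * int N) * (sqrt 6 / 8)^2)"
    using binomial_distribution.prob_abs_ge'[OF bd, of N "sqrt 6 / 8"] assms by simp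
  also have "real_of_int (- 2 * int N) * (sqrt 6 / 8)^2 = - 3 * real N / 16"
    by (simp add: power_divide)
  finally show ?thesis .
qed

lemma local_est:
  fixes \<theta> :: real and N nx ny k :: nat
  assumes "N \<ge> 1"
    and "\<bar>real nx / real N - (1 + cos (2 * pi * 2 ^ (k - 1) * \<theta>)) / 2\<bar> < sqrt 6 / 8"
    and "\<bar>real ny / real N - (1 + sin (2 * pi * 2 ^ (k - 1) * \<theta>)) / 2\<bar> < sqrt 6 / 8"
  shows "\<exists>i::int. 0 < 2^(k-1) * \<theta> - x_est N nx ny - i \<and> 2^(k-1) * \<theta> - x_est N nx ny - i < 1/3"
proof -
  define \<alpha> where "\<alpha> = 2 * pi * 2 ^ (k - 1) * \<theta>"
  define a where "a = 2 * real nx / real N - 1"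
  define b where "b = 2 * real ny / real N - 1"
  have "a - cos \<alpha> = 2 * (real nx / real N - (1 + cos \<alpha>) / 2)" unfolding a_def by (simp add: field_simps)
  then have "\<bar>a - cos \<alpha>\<bar> = \<bar>2::real\<bar> * \<bar>real nx / real N - (1 + cos \<alpha>) / 2\<bar>" by (simp only: abs_mult)
  moreover have "\<bar>real nx / real N - (1 + cos \<alpha>) / 2\<bar> < sqrt 6 / 8" using assms(2) unfolding \<alpha>_def .
  ultimately have ha: "\<bar>a - cos \<alpha>\<bar> < sqrt 6 / 4" by simp
  have "b - sin \<alpha> = 2 * (real ny / real N - (1 + sin \<alpha>) / 2)" unfolding b_def by (simp add: field_simps)
  then have "\<bar>b - sin \<alpha>\<bar> = \<bar>2::real\<bar> * \<bar>real ny / real N - (1 + sin \<alpha>) / 2\<bar>" by (simp only: abs_mult)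
  moreover have "\<bar>real ny / real N - (1 + sin \<alpha>) / 2\<bar> < sqrt 6 / 8" using assms(3) unfolding \<alpha>_def .
  ultimately have hb: "\<bar>b - sin \<alpha>\<bar> < sqrt 6 / 4" by simp
  obtain i :: int where i: "\<bar>rmod (Arg (Complex a b)) (2*pi) / (2*pi) - \<alpha>/(2*pi) - i\<bar> < 1/6"
    using geo[OF ha hb] by blast
  have t: "t_est N nx ny = rmod (Arg (Complex a b)) (2*pi) / (2*pi)"
    unfolding t_est_def atan2_def a_def b_def by simp
  have al: "\<alpha>/(2*pi) = 2^(k-1) * \<theta>" unfolding \<alpha>_def by simp
  show ?thesis using shiftB[of "t_est N nx ny" "2^(k-1) * \<theta>" i] i unfolding t al x_est_def by simp
qed

theorem mainTheorem4:
  fixes l N :: nat and \<epsilon> \<theta> :: real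
  assumes "l \<ge> 1" and "0 < \<epsilon>" and "\<epsilon> < 1"
    and "0 \<le> \<theta>" and "\<theta> < 1"
    and "N \<ge> 1" and "real N \<ge> 5.34 * ln (4 * real l / \<epsilon>)"
  shows "measure_pmf.prob (counts_pmf l N \<theta>)
           {(nx, ny). on_arc \<theta> (z_seq (\<lambda>k. x_est N (nx k) (ny k)) l / 2 ^ (l - 1))
                               ((z_seq (\<lambda>k. x_est N (nx k) (ny k)) l + 1/3) / 2 ^ (l - 1))}
         \<ge> 1 - \<epsilon> \<and>
         measure_pmf.prob (counts_pmf l N \<theta>)
           {(nx, ny). circ_dist
                (rmod ((z_seq (\<lambda>k. x_est N (nx k) (ny k)) l + 1/6) / 2 ^ (l - 1)) 1) \<theta>
              \<le> 1 / (3 * 2 ^ l)}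
         \<ge> 1 - \<epsilon>"
proof -
  have cb: "\<And>x::real. 0 \<le> 1 + cos x" "\<And>x::real. 1 + cos x \<le> 2" "\<And>x::real. 0 \<le> 1 + sin x" "\<And>x::real. 1 + sin x \<le> 2"
    using cos_ge_minus_one cos_le_one sin_ge_minus_one sin_le_one by (smt (verit))+
  define p :: "nat \<Rightarrow> real" where "p k = (1 + cos (2 * pi * 2 ^ (k - 1) * \<theta>)) / 2" for k
  define q :: "nat \<Rightarrow> real" where "q k = (1 + sin (2 * pi * 2 ^ (k - 1) * \<theta>)) / 2" for k
  define Gd where "Gd = {w :: (nat \<Rightarrow> nat) \<times> (nat \<Rightarrow> nat). \<forall>k\<in>{1..l}.
      \<bar>real (fst w k) / real N - p k\<bar> < sqrt 6 / 8 \<and> \<bar>real (snd w k) / real N - q k\<bar> < sqrt 6 / 8}"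
  define M where "M = counts_pmf l N \<theta>"
  define E1 where "E1 = {(nx, ny). on_arc \<theta> (z_seq (\<lambda>k. x_est N (nx k) (ny k)) l / 2 ^ (l - 1))
                               ((z_seq (\<lambda>k. x_est N (nx k) (ny k)) l + 1/3) / 2 ^ (l - 1))}"
  define E2 where "E2 = {(nx, ny). circ_dist
                (rmod ((z_seq (\<lambda>k. x_est N (nx k) (ny k)) l + 1/6) / 2 ^ (l - 1)) 1) \<theta>
              \<le> 1 / (3 * 2 ^ l)}"
  have sub: "Gd \<subseteq> E1 \<inter> E2"
  proof
    fix w assume w: "w \<in> Gd"
    obtain nx ny where wn: "w = (nx, ny)" by (cases w)
    have "\<And>k. 1 \<le> k \<Longrightarrow> k \<le> l \<Longrightarrow> (\<exists>i::int. 0 < 2^(k-1) * \<theta> - (\<lambda>k. x_est N (nx k) (ny k)) k - i \<and> 2^(k-1) * \<theta> - (\<lambda>k. x_est N (nx k) (ny k)) k - i < 1/3)"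
    proof -
      fix k assume "1 \<le> k" "k \<le> l"
      then have "\<bar>real (nx k) / real N - p k\<bar> < sqrt 6 / 8 \<and> \<bar>real (ny k) / real N - q k\<bar> < sqrt 6 / 8"
        using w unfolding Gd_def wn by auto
      then show "\<exists>i::int. 0 < 2^(k-1) * \<theta> - (\<lambda>k. x_est N (nx k) (ny k)) k - i \<and> 2^(k-1) * \<theta> - (\<lambda>k. x_est N (nx k) (ny k)) k - i < 1/3"
        using local_est[of N "nx k" k \<theta> "ny k"] assms(6) unfolding p_def q_def by simp
    qed
    from final_arc[OF assms(1) assms(4) assms(5) this]
    show "w \<in> E1 \<inter> E2" unfolding E1_def E2_def wn by simp
  qed
  define A where "A k = {w :: (nat \<Rightarrow> nat) \<times> (nat \<Rightarrow> nat). sqrt 6 / 8 \<le> \<bar>real (fst w k) / real N - p k\<bar>}" for k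
  define B where "B k = {w :: (nat \<Rightarrow> nat) \<times> (nat \<Rightarrow> nat). sqrt 6 / 8 \<le> \<bar>real (snd w k) / real N - q k\<bar>}" for k
  have comp: "UNIV - Gd \<subseteq> (\<Union>k\<in>{1..l}. A k \<union> B k)"
    unfolding Gd_def A_def B_def by auto
  have pA: "measure_pmf.prob M (A k) \<le> 2 * exp (- 3 * real N / 16)" if "k \<in> {1..l}" for k
  proof -
    have "measure_pmf.prob M (A k) = measure_pmf.prob (binomial_pmf N (p k)) {x. sqrt 6 / 8 \<le> \<bar>real x / real N - p k\<bar>}"
      unfolding M_def A_def p_def using margA[OF that, of N \<theta> "\<lambda>x. sqrt 6 / 8 \<le> \<bar>real x / real N - p k\<bar>"]
      unfolding p_def by simp
    also have "\<dots> \<le> 2 * exp (- 3 * real N / 16)"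
      unfolding p_def by (intro hoef)
        (use assms(6) in \<open>auto simp: cb\<close>)
    finally show ?thesis .
  qed
  have pB: "measure_pmf.prob M (B k) \<le> 2 * exp (- 3 * real N / 16)" if "k \<in> {1..l}" for k
  proof -
    have "measure_pmf.prob M (B k) = measure_pmf.prob (binomial_pmf N (q k)) {x. sqrt 6 / 8 \<le> \<bar>real x / real N - q k\<bar>}"
      unfolding M_def B_def q_def using margB[OF that, of N \<theta> "\<lambda>x. sqrt 6 / 8 \<le> \<bar>real x / real N - q k\<bar>"]
      unfolding q_def by simp
    also have "\<dots> \<le> 2 * exp (- 3 * real N / 16)"
      unfolding q_def by (intro hoef)
        (use assms(6) in \<open>auto simp: cb\<close>)
    finally show ?thesis .
  qed
  have "measure_pmf.prob M (UNIV - Gd) \<le> measure_pmf.prob M (\<Union>k\<in>{1..l}. A k \<union> B k)"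
    using comp by (intro measure_pmf.finite_measure_mono) auto
  also have "\<dots> \<le> (\<Sum>k\<in>{1..l}. measure_pmf.prob M (A k \<union> B k))"
    by (intro measure_pmf.finite_measure_subadditive_finite) auto
  also have "\<dots> \<le> (\<Sum>k\<in>{1..l}. 4 * exp (- 3 * real N / 16))"
  proof (intro sum_mono)
    fix k assume k: "k \<in> {1..l}"
    have "measure_pmf.prob M (A k \<union> B k) \<le> measure_pmf.prob M (A k) + measure_pmf.prob M (B k)"
      by (intro measure_Un_le) auto
    then show "measure_pmf.prob M (A k \<union> B k) \<le> 4 * exp (- 3 * real N / 16)"
      using pA[OF k] pB[OF k] by linarith
  qed
  also have "\<dots> = 4 * real l * exp (- 3 * real N / 16)" by simp
  also have "\<dots> \<le> \<epsilon>"
  proof -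
    define L where "L = ln (4 * real l / \<epsilon>)"
    have pos: "4 * real l / \<epsilon> > 0" using assms by simp
    have L0: "L > 0" unfolding L_def using assms by (simp add: field_simps)
    have d: "(5.34::real) = 534/100" by simp
    have "534/100 * L \<le> real N" using assms(7) unfolding L_def d .
    then have "3 * real N / 16 \<ge> L" using L0 by linarith
    then have "exp (- 3 * real N / 16) \<le> exp (- L)" by simp
    also have "exp (- L) = \<epsilon> / (4 * real l)" unfolding L_def using pos
      by (simp add: exp_minus)
    finally have "exp (- 3 * real N / 16) \<le> \<epsilon> / (4 * real l)" .
    then show ?thesis using assms(1) by (simp add: field_simps)
  qed
  finally have bad: "measure_pmf.prob M (UNIV - Gd) \<le> \<epsilon>" .
  have good: "measure_pmf.prob M Gd \<ge> 1 - \<epsilon>"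
    using measure_pmf.prob_compl[of Gd M] bad by (simp add: Compl_eq_Diff_UNIV)
  have "measure_pmf.prob M Gd \<le> measure_pmf.prob M E1"
    using sub by (intro measure_pmf.finite_measure_mono) auto
  moreover have "measure_pmf.prob M Gd \<le> measure_pmf.prob M E2"
    using sub by (intro measure_pmf.finite_measure_mono) auto
  ultimately show ?thesis using good unfolding M_def E1_def E2_def by linarith
qed

end
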